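(* Let $S=K[x_1,\ldots,x_n]$ and let $I$ be a square-free monomial ideal of $S$ of degree $d$ with minimal generating set $G(I)$. Then $I$ is an $f$-ideal if and only if $G(I)$ is $(n,d)^{th}$ perfect and $|G(I)|=\frac12 C_n^d$.
   Context: $K$ is a field; $C_n^d$ is the binomial coefficient. $sm(S)_d$ denotes the set of square-free monomials of degree $d$ in $S$. A monomial ideal $I$ is "of degree $d$" if all monomials in its minimal generating set $G(I)$ have degree $d$. For a set $A$ of square-free monomials, $\sqcup(A)=\{gx_i\mid g\in A,\ x_i\nmid g,\ 1\le i\le n\}$ and $\sqcap(A)=\{h\mid h\ne 1,\ h=g/x_i \text{ for some } g\in A \text{ and some } x_i\mid g\}$. A set $A\subseteq sm(S)_d$ is upper perfect if $\sqcup(A)=sm(S)_{d+1}$, lower perfect if $\sqcap(A)=sm(S)_{d-1}$, and $(n,d)^{th}$ perfect if it is both. Let $\sigma$ be the bijection from square-free monomials to subsets of $[n]$, $x_{i_1}\cdots x_{i_k}\mapsto\{i_1,\ldots,i_k\}$. The facet complex $\delta_{\mathcal{F}}(I)$ is the simplicial complex with facets $\sigma(g)$, $g\in G(I)$; the Stanley–Reisner complex is $\delta_{\mathcal{N}}(I)=\{\sigma(g)\mid g \text{ square-free monomial},\ g\notin I\}$. $I$ is an $f$-ideal if $\delta_{\mathcal{F}}(I)$ and $\delta_{\mathcal{N}}(I)$ have the same $f$-vector (number of faces of each dimension). *)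

theory Defs
  imports Main
begin

text \<open>Square-free monomials of S = K[x_1,...,x_n] are identified, via the bijection sigma,
  with subsets of {1..n}.  A square-free monomial ideal is determined by its minimal
  generating set G(I), given here as a set of subsets of {1..n}.\<close>

definition sm :: "nat \<Rightarrow> nat \<Rightarrow> nat set set" where
  "sm n d = {F. F \<subseteq> {1..n} \<and> card F = d}"

definition sqcup_set :: "nat \<Rightarrow> nat set set \<Rightarrow> nat set set" where
  "sqcup_set n A = {insert i g | g i. g \<in> A \<and> i \<in> {1..n} \<and> i \<notin> g}"

text \<open>The lower shadow: g/x_i with x_i dividing g, excluding the monomial 1.\<close>
definition sqcap_set :: "nat set set \<Rightarrow> nat set set" where
  "sqcap_set A = {g - {i} | g i. g \<in> A \<and> i \<in> g \<and> g - {i} \<noteq> {}}"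

definition upper_perfect :: "nat \<Rightarrow> nat \<Rightarrow> nat set set \<Rightarrow> bool" where
  "upper_perfect n d A \<longleftrightarrow> sqcup_set n A = sm n (d + 1)"

definition lower_perfect :: "nat \<Rightarrow> nat \<Rightarrow> nat set set \<Rightarrow> bool" where
  "lower_perfect n d A \<longleftrightarrow> sqcap_set A = sm n (d - 1)"

definition nd_perfect :: "nat \<Rightarrow> nat \<Rightarrow> nat set set \<Rightarrow> bool" where
  "nd_perfect n d A \<longleftrightarrow> upper_perfect n d A \<and> lower_perfect n d A"

text \<open>Membership of the square-free monomial sigma^{-1}(F) in the ideal generated by G.\<close>
definition in_ideal :: "nat set set \<Rightarrow> nat set \<Rightarrow> bool" where
  "in_ideal G F \<longleftrightarrow> (\<exists>g\<in>G. g \<subseteq> F)"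

definition facet_complex :: "nat set set \<Rightarrow> nat set set" where
  "facet_complex G = {F. \<exists>g\<in>G. F \<subseteq> g}"

definition SR_complex :: "nat \<Rightarrow> nat set set \<Rightarrow> nat set set" where
  "SR_complex n G = {F. F \<subseteq> {1..n} \<and> \<not> in_ideal G F}"

text \<open>Equal f-vectors: same number of faces with k vertices (dimension k-1) for every k.\<close>
definition f_ideal :: "nat \<Rightarrow> nat set set \<Rightarrow> bool" where
  "f_ideal n G \<longleftrightarrow>
     (\<forall>k. card {F \<in> facet_complex G. card F = k} = card {F \<in> SR_complex n G. card F = k})"

end

theory Submission
  imports Defs
begin

lemma extend_subset:
  assumes "finite A" "F \<subseteq> A" "card F \<le> m" "m \<le> card A"
  shows "\<exists>F'. F \<subseteq> F' \<and> F' \<subseteq> A \<and> card F' = m"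
proof -
  have fF: "finite F" using assms finite_subset by blast
  have "m - card F \<le> card (A - F)" using assms fF by (simp add: card_Diff_subset)
  then obtain T where T: "T \<subseteq> A - F" "card T = m - card F"
    by (meson obtain_subset_with_card_n)
  have fT: "finite T" using T assms finite_subset by blast
  have "card (F \<union> T) = card F + card T" using T fF fT by (intro card_Un_disjoint) auto
  thus ?thesis using T assms by (intro exI[of _ "F \<union> T"]) auto
qed

theorem theorem2p4:
  fixes n d :: nat and G :: "nat set set"
  assumes "d \<ge> 2"
    and "G \<noteq> {}"
    and "G \<subseteq> sm n d"
  shows "f_ideal n G \<longleftrightarrow> nd_perfect n d G \<and> 2 * card G = n choose d"
proof -
  define FC where "FC k = {F \<in> facet_complex G. card F = k}" for k
  define SR where "SR k = {F \<in> SR_complex n G. card F = k}" for k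
  have fid: "f_ideal n G \<longleftrightarrow> (\<forall>k. card (FC k) = card (SR k))"
    unfolding f_ideal_def FC_def SR_def by simp
  have Gsub: "\<And>g. g \<in> G \<Longrightarrow> g \<subseteq> {1..n} \<and> card g = d"
    using assms(3) unfolding sm_def by blast
  have Gfin: "\<And>g. g \<in> G \<Longrightarrow> finite g" using Gsub finite_subset by blast
  have smcard: "\<And>k. card (sm n k) = n choose k"
    unfolding sm_def using n_subsets[of "{1..n}"] by simp
  have smfin: "\<And>k. finite (sm n k)" unfolding sm_def by simp
  have finG: "finite G" using assms(3) smfin finite_subset by blast
  have cardG: "card G \<le> n choose d" using assms(3) smfin smcard card_mono by metis
  obtain g0 where g0: "g0 \<in> G" using assms(2) by blast
  have nd: "d \<le> n"
  proof -
    have "card g0 \<le> card {1..n}" using Gsub[OF g0] by (intro card_mono) auto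
    thus ?thesis using Gsub[OF g0] by simp
  qed
  have FCsub: "\<And>k. FC k \<subseteq> sm n k"
    unfolding FC_def sm_def facet_complex_def using Gsub by blast
  have FCbig: "\<And>k. k > d \<Longrightarrow> FC k = {}"
  proof -
    fix k assume "k > d"
    { fix F assume "F \<in> FC k"
      then obtain g where "g \<in> G" "F \<subseteq> g" "card F = k" unfolding FC_def facet_complex_def by blast
      hence "card F \<le> card g" using Gfin card_mono by blast
      hence False using Gsub[OF \<open>g \<in> G\<close>] \<open>card F = k\<close> \<open>k > d\<close> by simp }
    thus "FC k = {}" by blast
  qed
  have FCd: "FC d = G"
  proof
    show "FC d \<subseteq> G"
    proof
      fix F assume "F \<in> FC d"
      then obtain g where "g \<in> G" "F \<subseteq> g" "card F = d" unfolding FC_def facet_complex_def by blast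
      thus "F \<in> G" using Gfin Gsub card_subset_eq by metis
    qed
    show "G \<subseteq> FC d" unfolding FC_def facet_complex_def using Gsub by blast
  qed
  have SRsmall: "\<And>k. k < d \<Longrightarrow> SR k = sm n k"
  proof -
    fix k assume k: "k < d"
    { fix F assume F: "F \<subseteq> {1..n}" "card F = k"
      have "\<not> in_ideal G F"
      proof
        assume "in_ideal G F"
        then obtain g where "g \<in> G" "g \<subseteq> F" unfolding in_ideal_def by blast
        moreover have "finite F" using F(1) finite_subset by blast
        ultimately have "card g \<le> card F" using card_mono by blast
        thus False using F Gsub[OF \<open>g \<in> G\<close>] k by simp
      qed }
    thus "SR k = sm n k" unfolding SR_def SR_complex_def sm_def by blast
  qed
  have SRd: "SR d = sm n d - G"
  proof
    show "SR d \<subseteq> sm n d - G"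
      unfolding SR_def SR_complex_def sm_def in_ideal_def by blast
    show "sm n d - G \<subseteq> SR d"
    proof
      fix F assume F: "F \<in> sm n d - G"
      have "\<not> in_ideal G F"
      proof
        assume "in_ideal G F"
        then obtain g where "g \<in> G" "g \<subseteq> F" unfolding in_ideal_def by blast
        moreover have "finite F" "card F = d" "F \<notin> G" using F finite_subset unfolding sm_def by auto
        ultimately have "g = F" using Gsub card_subset_eq by metis
        thus False using \<open>g \<in> G\<close> \<open>F \<notin> G\<close> by simp
      qed
      thus "F \<in> SR d" using F unfolding SR_def SR_complex_def sm_def by blast
    qed
  qed
  have cSRd: "card (SR d) = (n choose d) - card G"
    using SRd assms(3) smcard smfin by (simp add: card_Diff_subset finG)
  have SRfin: "\<And>k. finite (SR k)"
    unfolding SR_def SR_complex_def by (rule finite_subset[of _ "Pow {1..n}"]) auto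
  have sqcup_sub: "sqcup_set n G \<subseteq> sm n (d+1)"
  proof
    fix F assume "F \<in> sqcup_set n G"
    then obtain g i where "F = insert i g" "g \<in> G" "i \<in> {1..n}" "i \<notin> g"
      unfolding sqcup_set_def by blast
    thus "F \<in> sm n (d+1)" using Gsub Gfin unfolding sm_def by auto
  qed
  have sqcap_sub: "sqcap_set G \<subseteq> sm n (d-1)"
  proof
    fix F assume "F \<in> sqcap_set G"
    then obtain g i where "F = g - {i}" "g \<in> G" "i \<in> g"
      unfolding sqcap_set_def by blast
    thus "F \<in> sm n (d-1)" using Gsub Gfin unfolding sm_def by auto
  qed
  show ?thesis
  proof
    assume f: "f_ideal n G"
    hence eq: "\<And>k. card (FC k) = card (SR k)" using fid by blast
    have two: "2 * card G = n choose d" using eq[of d] FCd cSRd cardG by simp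
    have low: "sm n (d-1) \<subseteq> sqcap_set G"
    proof
      fix F assume F: "F \<in> sm n (d-1)"
      have "card (FC (d-1)) = card (sm n (d-1))" using eq SRsmall assms(1) by simp
      hence "FC (d-1) = sm n (d-1)" using FCsub smfin card_subset_eq by metis
      with F obtain g where g: "g \<in> G" "F \<subseteq> g" "card F = d - 1"
        unfolding FC_def facet_complex_def by blast
      have "finite F" using g Gfin finite_subset by blast
      hence "card (g - F) = card g - card F" using g by (simp add: card_Diff_subset)
      hence "card (g - F) = 1" using g Gsub[OF \<open>g \<in> G\<close>] assms(1) by simp
      then obtain i where i: "g - F = {i}" by (meson card_1_singletonE)
      hence "F = g - {i}" "i \<in> g" using g by auto
      moreover have "F \<noteq> {}" using g assms(1) by auto
      ultimately show "F \<in> sqcap_set G" using g unfolding sqcap_set_def by blast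
    qed
    have up: "sm n (d+1) \<subseteq> sqcup_set n G"
    proof
      fix F assume F: "F \<in> sm n (d+1)"
      have "card (SR (d+1)) = 0" using eq[of "d+1"] FCbig[of "d+1"] by simp
      hence "SR (d+1) = {}" using SRfin by simp
      hence "in_ideal G F" using F unfolding SR_def SR_complex_def sm_def by blast
      then obtain g where g: "g \<in> G" "g \<subseteq> F" unfolding in_ideal_def by blast
      have fF: "finite F" using F unfolding sm_def using finite_subset by blast
      have "card (F - g) = 1" using g F Gsub Gfin fF unfolding sm_def by (simp add: card_Diff_subset)
      then obtain i where i: "F - g = {i}" by (meson card_1_singletonE)
      hence "F = insert i g" "i \<notin> g" "i \<in> {1..n}" using g F unfolding sm_def by auto
      thus "F \<in> sqcup_set n G" using g unfolding sqcup_set_def by blast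
    qed
    show "nd_perfect n d G \<and> 2 * card G = n choose d"
      using two low up sqcap_sub sqcup_sub
      unfolding nd_perfect_def upper_perfect_def lower_perfect_def by blast
  next
    assume h: "nd_perfect n d G \<and> 2 * card G = n choose d"
    have low: "sqcap_set G = sm n (d-1)" and up: "sqcup_set n G = sm n (d+1)"
      using h unfolding nd_perfect_def upper_perfect_def lower_perfect_def by auto
    have "card (FC k) = card (SR k)" for k
    proof (cases "k < d")
      case True
      have "sm n k \<subseteq> FC k"
      proof
        fix F assume F: "F \<in> sm n k"
        hence "F \<subseteq> {1..n}" "card F = k" unfolding sm_def by auto
        then obtain F' where F': "F \<subseteq> F'" "F' \<subseteq> {1..n}" "card F' = d - 1"
          using extend_subset[of "{1..n}" F "d-1"] True nd by fastforce
        hence "F' \<in> sqcap_set G" using low unfolding sm_def by auto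
        then obtain g i where "F' = g - {i}" "g \<in> G" unfolding sqcap_set_def by blast
        thus "F \<in> FC k" using F' \<open>card F = k\<close> unfolding FC_def facet_complex_def by blast
      qed
      hence "FC k = sm n k" using FCsub by blast
      thus ?thesis using SRsmall True by simp
    next
      case False
      show ?thesis
      proof (cases "k = d")
        case True
        have "2 * card G = n choose d" using h by blast
        hence "card G = (n choose d) - card G" by arith
        thus ?thesis using FCd cSRd True by simp
      next
        case False
        hence kd: "k > d" using \<open>\<not> k < d\<close> by simp
        have "SR k = {}"
        proof (rule ccontr)
          assume "SR k \<noteq> {}"
          then obtain F where F: "F \<subseteq> {1..n}" "card F = k" "\<not> in_ideal G F"
            unfolding SR_def SR_complex_def by blast
          obtain F' where F': "F' \<subseteq> F" "card F' = d + 1"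
            using obtain_subset_with_card_n[of "d+1" F] F kd by (metis Suc_eq_plus1 Suc_leI)
          hence "F' \<in> sqcup_set n G" using up F unfolding sm_def by auto
          then obtain g i where "F' = insert i g" "g \<in> G" unfolding sqcup_set_def by blast
          thus False using F F' unfolding in_ideal_def by blast
        qed
        thus ?thesis using FCbig kd by simp
      qed
    qed
    thus "f_ideal n G" using fid by blast
  qed
qed

end
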